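(* Let $P\in\mathbb{N}_0^{n\times n}$ be an incidence matrix with $n\geq 3$. If $P$ is positive upper triangular, i.e. $P_{ij}=0$ for $i>j$ and $P_{ij}\geq 1$ for all $i\leq j$, then $P$ exclusively represents reducible morphisms.
   Context: Let $\Sigma=\{a_1,\dots,a_n\}$. A morphism $\varphi:\Sigma^+\to\Sigma^+$ (non-empty images) is Parikh-positive if every letter occurs in $\varphi(a_1)\cdots\varphi(a_n)$. Its incidence matrix is $P(\varphi)=(m_{i,j})$ with $m_{i,j}=|\varphi(a_j)|_{a_i}$. An automorphism is an injective morphism mapping each letter to a single letter; a morphism is reducible if it equals $\psi_2\circ\psi_1$ with neither $\psi_1,\psi_2$ an automorphism. An incidence matrix $P$ exclusively represents reducible morphisms if every Parikh-positive morphism $\varphi$ with $P(\varphi)=P$ is reducible. *)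

theory Defs
  imports Main
begin

text \<open>Alphabet \<Sigma> = {a_1,...,a_n} is represented by the letters 0..n-1 (type nat);
  words are lists of letters. A morphism \<Sigma>^+ \<rightarrow> \<Sigma>^+ is determined by the images
  of the letters, represented by a function h :: nat \<Rightarrow> nat list (only values
  on letters < n matter).\<close>

definition is_morphism :: "nat \<Rightarrow> (nat \<Rightarrow> nat list) \<Rightarrow> bool" where
  "is_morphism n h \<longleftrightarrow> (\<forall>a<n. h a \<noteq> [] \<and> set (h a) \<subseteq> {..<n})"

definition ext_morph :: "(nat \<Rightarrow> nat list) \<Rightarrow> nat list \<Rightarrow> nat list" where
  "ext_morph h w = concat (map h w)"

definition parikh_positive :: "nat \<Rightarrow> (nat \<Rightarrow> nat list) \<Rightarrow> bool" where
  "parikh_positive n h \<longleftrightarrow> (\<forall>i<n. i \<in> set (concat (map h [0..<n])))"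

definition is_automorphism :: "nat \<Rightarrow> (nat \<Rightarrow> nat list) \<Rightarrow> bool" where
  "is_automorphism n h \<longleftrightarrow> is_morphism n h \<and> (\<forall>a<n. length (h a) = 1) \<and> inj_on h {..<n}"

definition reducible :: "nat \<Rightarrow> (nat \<Rightarrow> nat list) \<Rightarrow> bool" where
  "reducible n \<phi> \<longleftrightarrow> (\<exists>\<psi>1 \<psi>2. is_morphism n \<psi>1 \<and> is_morphism n \<psi>2 \<and>
      \<not> is_automorphism n \<psi>1 \<and> \<not> is_automorphism n \<psi>2 \<and>
      (\<forall>a<n. \<phi> a = ext_morph \<psi>2 (\<psi>1 a)))"

definition has_incidence_matrix :: "nat \<Rightarrow> (nat \<Rightarrow> nat list) \<Rightarrow> (nat \<Rightarrow> nat \<Rightarrow> nat) \<Rightarrow> bool" where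
  "has_incidence_matrix n \<phi> P \<longleftrightarrow> (\<forall>i<n. \<forall>j<n. P i j = count_list (\<phi> j) i)"

definition exclusively_represents_reducible :: "nat \<Rightarrow> (nat \<Rightarrow> nat \<Rightarrow> nat) \<Rightarrow> bool" where
  "exclusively_represents_reducible n P \<longleftrightarrow>
     (\<forall>\<phi>. is_morphism n \<phi> \<and> parikh_positive n \<phi> \<and> has_incidence_matrix n \<phi> P \<longrightarrow> reducible n \<phi>)"

end

theory Submission
  imports Defs
begin

lemma cnt_in: "count_list xs i \<ge> 1 \<Longrightarrow> i \<in> set xs"
  by (induction xs) (auto split: if_splits)

lemma cnt_notin: "count_list xs i = 0 \<Longrightarrow> i \<notin> set xs"
  by (induction xs) (auto split: if_splits)

lemma len2: "a \<in> set xs \<Longrightarrow> b \<in> set xs \<Longrightarrow> a \<noteq> b \<Longrightarrow> length xs \<noteq> 1"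
  by (cases xs) auto

lemma concat_single: "(\<forall>x\<in>set w. h x = [x]) \<Longrightarrow> concat (map h w) = w"
  by (induction w) auto

theorem proposition20:
  fixes n :: nat and P :: "nat \<Rightarrow> nat \<Rightarrow> nat"
  assumes "n \<ge> 3"
    and "\<forall>i<n. \<forall>j<n. j < i \<longrightarrow> P i j = 0"
    and "\<forall>i<n. \<forall>j<n. i \<le> j \<longrightarrow> P i j \<ge> 1"
  shows "exclusively_represents_reducible n P"
  unfolding exclusively_represents_reducible_def
proof (intro allI impI)
  fix \<phi> assume H: "is_morphism n \<phi> \<and> parikh_positive n \<phi> \<and> has_incidence_matrix n \<phi> P"
  have mor: "\<And>a. a < n \<Longrightarrow> \<phi> a \<noteq> [] \<and> set (\<phi> a) \<subseteq> {..<n}"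
    using H unfolding is_morphism_def by blast
  have inc: "\<And>i j. i < n \<Longrightarrow> j < n \<Longrightarrow> P i j = count_list (\<phi> j) i"
    using H unfolding has_incidence_matrix_def by blast
  have inset: "\<And>i j. i < n \<Longrightarrow> j < n \<Longrightarrow> i \<le> j \<Longrightarrow> i \<in> set (\<phi> j)"
    using assms(3) inc cnt_in by metis
  have notin: "\<And>i j. i < n \<Longrightarrow> j < n \<Longrightarrow> j < i \<Longrightarrow> i \<notin> set (\<phi> j)"
    using assms(2) inc cnt_notin by metis
  have sub: "\<And>j. j < n - 1 \<Longrightarrow> set (\<phi> j) \<subseteq> {..<n-1}"
  proof
    fix j x assume j: "j < n - 1" and x: "x \<in> set (\<phi> j)"
    have "j < n" using j by auto
    hence "x < n" using mor[of j] x by auto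
    moreover have "\<not> j < x" using notin[of x j] j x \<open>x < n\<close> by auto
    ultimately show "x \<in> {..<n-1}" using j by auto
  qed
  define \<psi>1 where "\<psi>1 = (\<lambda>a. if a = n - 1 then [n - 1] else \<phi> a)"
  define \<psi>2 where "\<psi>2 = (\<lambda>a. if a = n - 1 then \<phi> a else [a])"
  have m1: "is_morphism n \<psi>1" unfolding is_morphism_def \<psi>1_def using mor assms(1) by auto
  have m2: "is_morphism n \<psi>2" unfolding is_morphism_def \<psi>2_def using mor assms(1) by auto
  have "length (\<psi>1 1) \<noteq> 1"
    unfolding \<psi>1_def using len2[OF inset[of 0 1] inset[of 1 1]] assms(1) by auto
  hence n1: "\<not> is_automorphism n \<psi>1" unfolding is_automorphism_def using assms(1) by force
  have "length (\<psi>2 (n-1)) \<noteq> 1"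
    unfolding \<psi>2_def using len2[OF inset[of 0 "n-1"] inset[of "n-1" "n-1"]] assms(1) by auto
  hence n2: "\<not> is_automorphism n \<psi>2" unfolding is_automorphism_def using assms(1) by force
  have "\<forall>a<n. \<phi> a = ext_morph \<psi>2 (\<psi>1 a)"
  proof (intro allI impI)
    fix a assume a: "a < n"
    show "\<phi> a = ext_morph \<psi>2 (\<psi>1 a)"
    proof (cases "a = n - 1")
      case True then show ?thesis unfolding ext_morph_def \<psi>1_def \<psi>2_def by simp
    next
      case False
      hence "a < n - 1" using a by auto
      hence "\<forall>x\<in>set (\<phi> a). \<psi>2 x = [x]" using sub unfolding \<psi>2_def by fastforce
      then show ?thesis unfolding ext_morph_def \<psi>1_def using False concat_single by metis
    qed
  qed
  then show "reducible n \<phi>" unfolding reducible_def using m1 m2 n1 n2 by blast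
qed

end
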